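(* For every integer $n\ge1$, the set $S_2^{(n)}=\{k\in\mathbb{R}\setminus B_n : E_{(a^{(n)}_{k,2},\,b^{(n)}_{k,2})} \text{ is defined over } \mathbb{Q}\}$ is countable.
   Context: Define $f_m,g_m\in\mathbb{Z}[T]$ by $f_0=0,f_1=1,g_0=2,g_1=T$, $f_m=Tf_{m-1}+f_{m-2}$, $g_m=Tg_{m-1}+g_{m-2}$, and set $F_n=f_{n+1}-f_n$, $G_n=g_{n+1}-g_n$. Let $B_n=\{k\in\mathbb{R}: F_n(k)-1=0 \text{ or } G_n(k)-k+2=0\}$. For $k\notin B_n$, the singular $k$-FL pair of level $n$ of Type 2 is $a^{(n)}_{k,2}=-\frac{27(F_n(k)-1)^2}{4(G_n(k)-k+2)^2}$, $b^{(n)}_{k,2}=\frac{27(F_n(k)-1)^3}{4(G_n(k)-k+2)^3}$. For real $a,b$, $E_{(a,b)}$ is the plane curve $y^2=x^3+ax+b$; it is defined over $\mathbb{Q}$ exactly when $a,b\in\mathbb{Q}$. *)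

theory Defs
  imports "HOL-Analysis.Analysis" "HOL-Computational_Algebra.Polynomial"
begin

fun fpoly :: "nat \<Rightarrow> int poly" where
  "fpoly 0 = 0"
| "fpoly (Suc 0) = 1"
| "fpoly (Suc (Suc m)) = [:0, 1:] * fpoly (Suc m) + fpoly m"

fun gpoly :: "nat \<Rightarrow> int poly" where
  "gpoly 0 = 2"
| "gpoly (Suc 0) = [:0, 1:]"
| "gpoly (Suc (Suc m)) = [:0, 1:] * gpoly (Suc m) + gpoly m"

definition Fpoly :: "nat \<Rightarrow> int poly" where
  "Fpoly n = fpoly (Suc n) - fpoly n"

definition Gpoly :: "nat \<Rightarrow> int poly" where
  "Gpoly n = gpoly (Suc n) - gpoly n"

definition evalR :: "int poly \<Rightarrow> real \<Rightarrow> real" where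
  "evalR p k = poly (map_poly of_int p) k"

definition Bset :: "nat \<Rightarrow> real set" where
  "Bset n = {k. evalR (Fpoly n) k - 1 = 0 \<or> evalR (Gpoly n) k - k + 2 = 0}"

definition a_type2 :: "nat \<Rightarrow> real \<Rightarrow> real" where
  "a_type2 n k = - (27 * (evalR (Fpoly n) k - 1)^2) / (4 * (evalR (Gpoly n) k - k + 2)^2)"

definition b_type2 :: "nat \<Rightarrow> real \<Rightarrow> real" where
  "b_type2 n k = (27 * (evalR (Fpoly n) k - 1)^3) / (4 * (evalR (Gpoly n) k - k + 2)^3)"

text \<open>The curve y^2 = x^3 + a x + b is defined over Q iff a, b are rational.\<close>
definition curve_defined_over_Q :: "real \<Rightarrow> real \<Rightarrow> bool" where
  "curve_defined_over_Q a b \<longleftrightarrow> a \<in> \<rat> \<and> b \<in> \<rat>"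

definition S2 :: "nat \<Rightarrow> real set" where
  "S2 n = {k. k \<notin> Bset n \<and> curve_defined_over_Q (a_type2 n k) (b_type2 n k)}"

end

theory Submission
  imports Defs
begin

lemma coeff_fg: "(\<forall>j\<ge>m. coeff (fpoly m) j = 0) \<and> (\<forall>j>m. coeff (gpoly m) j = 0)
   \<and> (m \<ge> 1 \<longrightarrow> coeff (gpoly m) m = 1)"
proof (induction m rule: fpoly.induct)
  case 1
  have "(2::int poly) = [:2:]" by (rule numeral_poly)
  show ?case by (simp add: numeral_poly coeff_pCons split: nat.splits)
next
  case 2 then show ?case by (simp add: coeff_pCons split: nat.splits)
next
  case (3 m)
  show ?case
  proof (intro conjI allI impI)
    fix j assume j: "j \<ge> Suc (Suc m)"
    then obtain i where i: "j = Suc i" by (cases j) auto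
    show "coeff (fpoly (Suc (Suc m))) j = 0" using 3 j i by (simp add: coeff_pCons)
  next
    fix j assume j: "j > Suc (Suc m)"
    then obtain i where i: "j = Suc i" by (cases j) auto
    show "coeff (gpoly (Suc (Suc m))) j = 0" using 3 j i by (simp add: coeff_pCons)
  next
    show "coeff (gpoly (Suc (Suc m))) (Suc (Suc m)) = 1" using 3 by (simp add: coeff_pCons)
  qed
qed

theorem theorem3p15:
  fixes n :: nat
  assumes "n \<ge> 1"
  shows "countable (S2 n)"
proof -
  define mF where "mF = map_poly (of_int :: int \<Rightarrow> real) (Fpoly n)"
  define mG where "mG = map_poly (of_int :: int \<Rightarrow> real) (Gpoly n)"
  define P where "P r = (mF - 1) - smult r (mG + [:2, -1:])" for r :: real
  have cF: "coeff mF (Suc n) = 0" unfolding mF_def Fpoly_def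
    using coeff_fg[of "Suc n"] coeff_fg[of n] by (simp add: coeff_map_poly)
  have cG: "coeff mG (Suc n) = 1" unfolding mG_def Gpoly_def
    using coeff_fg[of "Suc n"] coeff_fg[of n] by (simp add: coeff_map_poly)
  have c2: "coeff ([:2, -1:] :: real poly) (Suc n) = 0" using assms
    by (cases n) (auto simp: coeff_pCons)
  have c1: "coeff (1 :: real poly) (Suc n) = 0" by (simp add: coeff_1)
  have Pnz: "P r \<noteq> 0" if "r \<noteq> 0" for r
  proof
    assume "P r = 0"
    hence "coeff (P r) (Suc n) = 0" by simp
    thus False using that cF cG c2 c1 by (simp add: P_def)
  qed
  have evP: "poly (P r) k = (evalR (Fpoly n) k - 1) - r * (evalR (Gpoly n) k - k + 2)" for r k
    by (simp add: P_def mF_def mG_def evalR_def algebra_simps)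
  have sub: "S2 n \<subseteq> (\<Union>r\<in>\<rat> - {0}. {k. poly (P r) k = 0})"
  proof
    fix k assume "k \<in> S2 n"
    then have nb: "k \<notin> Bset n" and q: "a_type2 n k \<in> \<rat>" "b_type2 n k \<in> \<rat>"
      by (auto simp: S2_def curve_defined_over_Q_def)
    define x where "x = evalR (Fpoly n) k - 1"
    define y where "y = evalR (Gpoly n) k - k + 2"
    have x0: "x \<noteq> 0" and y0: "y \<noteq> 0" using nb by (auto simp: Bset_def x_def y_def)
    define r where "r = x / y"
    have a: "a_type2 n k = - 27/4 * r^2" unfolding a_type2_def r_def x_def[symmetric] y_def[symmetric]
      by (simp add: power_divide)
    have b: "b_type2 n k = 27/4 * r^3" unfolding b_type2_def r_def x_def[symmetric] y_def[symmetric]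
      by (simp add: power_divide)
    have r0: "r \<noteq> 0" using x0 y0 by (simp add: r_def)
    have "r = - b_type2 n k / a_type2 n k" using r0 unfolding a b
      by (simp add: power2_eq_square power3_eq_cube field_simps)
    hence rQ: "r \<in> \<rat>" using q by simp
    have "poly (P r) k = 0" unfolding evP x_def[symmetric] y_def[symmetric] r_def using y0 by simp
    thus "k \<in> (\<Union>r\<in>\<rat> - {0}. {k. poly (P r) k = 0})" using rQ r0 by blast
  qed
  have "countable (\<Union>r\<in>\<rat> - {0}. {k. poly (P r) k = 0})"
  proof (rule countable_UN)
    show "countable (\<rat> - {0::real})" using countable_rat by (rule countable_Diff)
    fix r assume "r \<in> \<rat> - {0::real}"
    hence "finite {k. poly (P r) k = 0}" using Pnz poly_roots_finite by blast
    thus "countable {k. poly (P r) k = 0}" by (rule countable_finite)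
  qed
  thus ?thesis using sub countable_subset by blast
qed

end
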